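(* Let $n\ge3$ and $q\ge2$ with $q-1\le\lfloor n/2\rfloor$, and let $m_1<\cdots<m_t$ be the minimal monomial generators of $I(C_n)^{[q-1]}$, listed in the order described in the context. Then for all $j<i$, either $(m_j:m_i)\subseteq (I(C_n)^{[q]}:m_i)$, or there exists $r<i$ such that $(m_r:m_i)$ is generated by a single variable and $(m_j:m_i)\subseteq (m_r:m_i)$.
   Context: $C_n$ is the cycle on $x_1,\dots,x_n$ with edges $\{x_i,x_{i+1}\}$ ($1\le i\le n-1$) and $\{x_1,x_n\}$; $I(C_n)$ is its edge ideal in $\mathbb{K}[x_1,\dots,x_n]$, and $I(C_n)^{[q]}$ is the ideal generated by the monomials $\prod_{v\in e_1\cup\dots\cup e_q}v$ for matchings $\{e_1,\dots,e_q\}$ of $C_n$ (zero if no such matching exists). For monomial ideals/monomials, $(I:f)=\{g: gf\in I\}$. Ordering: edges are ordered $\{x_1,x_2\}<\{x_2,x_3\}<\cdots<\{x_{n-1},x_n\}<\{x_1,x_n\}$. For a matching $M$ of size $q-1$, let $e(M)$ be the sequence of its edges in increasing order; matchings are compared by the lexicographic order on these sequences. Each minimal generator $m$ of $I(C_n)^{[q-1]}$ is associated with the lexicographically smallest matching $M$ whose product of covered vertices is $m$, and generators are ordered by the lexicographic order of the associated sequences $e(M)$. *)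

theory Defs
  imports "HOL-Library.Multiset"
begin

text \<open>Monomials in K[x_1,...,x_n] are modelled by multisets of variable indices
 (exponent vectors). A monomial ideal is modelled by the set of monomials it contains;
 for monomial ideals, containment and colons by monomials are determined by these sets.\<close>

definition monoms :: "nat \<Rightarrow> nat multiset set" where
  "monoms n = {u. set_mset u \<subseteq> {1..n}}"

definition mideal :: "nat \<Rightarrow> nat multiset set \<Rightarrow> nat multiset set" where
  "mideal n G = {u \<in> monoms n. \<exists>g\<in>G. g \<subseteq># u}"

definition mcolon :: "nat \<Rightarrow> nat multiset set \<Rightarrow> nat multiset \<Rightarrow> nat multiset set" where
  "mcolon n I f = {g \<in> monoms n. g + f \<in> I}"

definition mingens :: "nat multiset set \<Rightarrow> nat multiset set" where
  "mingens J = {u \<in> J. \<forall>v\<in>J. v \<subseteq># u \<longrightarrow> v = u}"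

text \<open>Edges of C_n indexed 1..n: edge i = {x_i,x_(i+1)} for i<n, edge n = {x_1,x_n};
 the edge order is the order of the indices.\<close>
definition cedge :: "nat \<Rightarrow> nat \<Rightarrow> nat set" where
  "cedge n i = (if i < n then {i, i+1} else {1, n})"

definition is_matching :: "nat \<Rightarrow> nat set \<Rightarrow> bool" where
  "is_matching n M \<longleftrightarrow> M \<subseteq> {1..n} \<and>
     (\<forall>i\<in>M. \<forall>j\<in>M. i \<noteq> j \<longrightarrow> cedge n i \<inter> cedge n j = {})"

definition mprod :: "nat \<Rightarrow> nat set \<Rightarrow> nat multiset" where
  "mprod n M = mset_set (\<Union>i\<in>M. cedge n i)"

definition matchings :: "nat \<Rightarrow> nat \<Rightarrow> nat set set" where
  "matchings n q = {M. is_matching n M \<and> card M = q}"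

text \<open>Monomials of the squarefree power I(C_n)^[q] (the empty set if it is the zero ideal).\<close>
definition sqpow :: "nat \<Rightarrow> nat \<Rightarrow> nat multiset set" where
  "sqpow n q = mideal n (mprod n ` matchings n q)"

definition lexless :: "nat list \<Rightarrow> nat list \<Rightarrow> bool" where
  "lexless xs ys \<longleftrightarrow> (xs, ys) \<in> lexord {(a, b). a < b}"

text \<open>Sequence e(M) of the lexicographically smallest matching of size q with product m.\<close>
definition gkey :: "nat \<Rightarrow> nat \<Rightarrow> nat multiset \<Rightarrow> nat list" where
  "gkey n q m = (THE L. L \<in> {sorted_list_of_set M | M. M \<in> matchings n q \<and> mprod n M = m} \<and>
     (\<forall>L'\<in>{sorted_list_of_set M | M. M \<in> matchings n q \<and> mprod n M = m}.
        L' \<noteq> L \<longrightarrow> lexless L L'))"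

end

theory Submission
  imports Defs "HOL-Library.List_Lexorder"
begin

definition W :: "nat \<Rightarrow> nat \<Rightarrow> nat" where "W n x = x mod n + 1"

definition cov :: "nat \<Rightarrow> nat set \<Rightarrow> nat set" where
  "cov n X = (\<Union>i\<in>X. cedge n i)"

lemma W_range: "n \<ge> 1 \<Longrightarrow> W n x \<in> {1..n}"
  unfolding W_def by (simp add: Suc_leI)

lemma W_eq: "W n x = W n y \<longleftrightarrow> x mod n = y mod n"
  unfolding W_def by simp

lemma W_surj: "v \<in> {1..n} \<Longrightarrow> v = W n (v - 1)"
  unfolding W_def by auto

lemma pred_mod:
  fixes n x :: nat
  assumes n: "n \<ge> 1"
  shows "(x + n - 1) mod n = (if x mod n = 0 then n - 1 else x mod n - 1)"
proof -
  define y where "y = (x + n - 1) mod n"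
  have n0: "0 < n" using n by simp
  have yl: "y < n" unfolding y_def using n0 by simp
  have "x mod n = (x + n) mod n" by simp
  also have "x + n = Suc (x + n - 1)" using n by simp
  also have "Suc (x + n - 1) mod n = (if Suc y = n then 0 else Suc y)"
    unfolding y_def by (rule mod_Suc)
  finally have e: "x mod n = (if Suc y = n then 0 else Suc y)" .
  show ?thesis
  proof (cases "Suc y = n")
    case True then show ?thesis using e unfolding y_def by auto
  next
    case False then show ?thesis using e unfolding y_def by auto
  qed
qed

lemma cedge_W: "n \<ge> 2 \<Longrightarrow> cedge n (W n x) = {W n x, W n (Suc x)}"
proof -
  assume n: "n \<ge> 2"
  have xl: "x mod n < n" using n by simp
  show ?thesis
  proof (cases "Suc (x mod n) = n")
    case False
    then have "Suc x mod n = Suc (x mod n)" by (simp add: mod_Suc)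
    then show ?thesis using False xl unfolding W_def cedge_def by auto
  next
    case True
    then have "Suc x mod n = 0" by (simp add: mod_Suc)
    then show ?thesis using True n unfolding W_def cedge_def by auto
  qed
qed

lemma W_pred: "n \<ge> 1 \<Longrightarrow> W n (Suc (x + n - 1)) = W n x"
  unfolding W_def by simp

lemma W_ne_pred: "n \<ge> 2 \<Longrightarrow> W n x \<noteq> W n (x + n - 1)"
  unfolding W_def using pred_mod[of n x] by auto

lemma inc_W:
  assumes n: "n \<ge> 2" and i: "i \<in> {1..n}"
  shows "W n x \<in> cedge n i \<longleftrightarrow> i = W n x \<or> i = W n (x + n - 1)"
proof -
  have ii: "i = W n (i - 1)" using W_surj[OF i] .
  have xl: "x mod n < n" using n by simp
  have "W n x \<in> cedge n i \<longleftrightarrow> W n x = W n (i - 1) \<or> W n x = W n (Suc (i - 1))"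
    using cedge_W[OF n, of "i - 1"] ii by auto
  also have "W n x = W n (Suc (i - 1)) \<longleftrightarrow> W n (i - 1) = W n (x + n - 1)"
  proof
    assume "W n x = W n (Suc (i - 1))"
    then show "W n (i - 1) = W n (x + n - 1)"
      unfolding W_def using pred_mod[of n x] pred_mod[of n "Suc (i - 1)"] n xl
      by (auto simp: mod_Suc split: if_splits)
  next
    assume "W n (i - 1) = W n (x + n - 1)"
    then show "W n x = W n (Suc (i - 1))"
      unfolding W_def using pred_mod[of n x] n
      apply (auto simp: mod_Suc split: if_splits)
      using xl by linarith
  qed
  finally show ?thesis using ii by auto
qed

lemma cedge_sub: "i \<in> {1..n} \<Longrightarrow> cedge n i \<subseteq> {1..n}"
  unfolding cedge_def by auto

lemma cedge_card: "i \<in> {1..n} \<Longrightarrow> n \<ge> 2 \<Longrightarrow> card (cedge n i) = 2"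
  unfolding cedge_def by auto

lemma finite_cedge: "finite (cedge n i)"
  unfolding cedge_def by auto

lemma cov_sub: assumes "M \<subseteq> {1..n}" shows "cov n M \<subseteq> {1..n}"
  unfolding cov_def
proof (rule UN_least)
  fix i assume "i \<in> M" then show "cedge n i \<subseteq> {1..n}" using assms cedge_sub[of i n] by blast
qed

lemma finite_cov: "M \<subseteq> {1..n} \<Longrightarrow> finite (cov n M)"
  by (rule finite_subset[OF cov_sub finite_atLeastAtMost])

lemma matching_sub: "is_matching n M \<Longrightarrow> M \<subseteq> {1..n}"
  unfolding is_matching_def by blast

lemma card_cov:
  assumes "is_matching n M" "n \<ge> 2"
  shows "card (cov n M) = 2 * card M"
proof -
  have sub: "M \<subseteq> {1..n}" using assms(1) by (rule matching_sub)
  then have fin: "finite M" using finite_subset[OF _ finite_atLeastAtMost] by blast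
  have "card (cov n M) = (\<Sum>i\<in>M. card (cedge n i))"
    unfolding cov_def
    by (rule card_UN_disjoint) (use fin finite_cedge assms(1) in \<open>auto simp: is_matching_def\<close>)
  also have "\<dots> = (\<Sum>i\<in>M. 2)" using cedge_card assms(2) sub by (intro sum.cong) auto
  finally show ?thesis by simp
qed

lemma mprod_cov: "mprod n M = mset_set (cov n M)"
  unfolding mprod_def cov_def ..

lemma cov_mem: "v \<in> cov n X \<longleftrightarrow> (\<exists>e\<in>X. v \<in> cedge n e)"
  unfolding cov_def by blast

lemma match_disj: "is_matching n M \<Longrightarrow> i \<in> M \<Longrightarrow> j \<in> M \<Longrightarrow> v \<in> cedge n i \<Longrightarrow> v \<in> cedge n j \<Longrightarrow> i = j"
  unfolding is_matching_def by blast

lemma tog_matching: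
  assumes M: "is_matching n M" and N: "is_matching n N"
    and clo: "\<And>e f. e \<in> (M - N) \<union> (N - M) \<Longrightarrow> f \<in> P \<Longrightarrow> cedge n e \<inter> cedge n f \<noteq> {} \<Longrightarrow> e \<in> P"
  shows "is_matching n ((M - P) \<union> (N \<inter> P))"
proof -
  have s: "(M - P) \<union> (N \<inter> P) \<subseteq> {1..n}" using matching_sub[OF M] matching_sub[OF N] by blast
  have d: "cedge n i \<inter> cedge n j = {}" if i: "i \<in> (M - P) \<union> (N \<inter> P)" and j: "j \<in> (M - P) \<union> (N \<inter> P)" and ij: "i \<noteq> j" for i j
  proof (rule ccontr)
    assume ne: "cedge n i \<inter> cedge n j \<noteq> {}"
    then obtain v where v: "v \<in> cedge n i" "v \<in> cedge n j" by blast
    consider "i \<in> M - P" "j \<in> M - P" | "i \<in> N \<inter> P" "j \<in> N \<inter> P"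
      | "i \<in> M - P" "j \<in> N \<inter> P" | "i \<in> N \<inter> P" "j \<in> M - P" using i j by blast
    then show False
    proof cases
      case 1 then show ?thesis using match_disj[OF M _ _ v] ij by blast
    next
      case 2 then show ?thesis using match_disj[OF N _ _ v] ij by blast
    next
      case 3
      show ?thesis
      proof (cases "i \<in> N")
        case True then show ?thesis using match_disj[OF N _ _ v] ij 3 by blast
      next
        case False then have "i \<in> P" using clo[of i j] 3 ne by blast
        then show ?thesis using 3 by blast
      qed
    next
      case 4
      have ne': "cedge n j \<inter> cedge n i \<noteq> {}" using ne by blast
      show ?thesis
      proof (cases "j \<in> N")
        case True then show ?thesis using match_disj[OF N _ _ v] ij 4 by blast
      next
        case False then have "j \<in> P" using clo[of j i] 4 ne' by blast
        then show ?thesis using 4 by blast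
      qed
    qed
  qed
  show ?thesis unfolding is_matching_def using s d by blast
qed

lemma tog_out:
  assumes "v \<notin> cov n P"
  shows "v \<in> cov n ((M - P) \<union> (N \<inter> P)) \<longleftrightarrow> v \<in> cov n M"
  using assms unfolding cov_mem by blast

lemma tog_int:
  assumes M: "is_matching n M" and N: "is_matching n N" and P: "P \<subseteq> (M - N) \<union> (N - M)"
    and e: "e1 \<in> P" "e2 \<in> P" "e1 \<noteq> e2" and v: "v \<in> cedge n e1" "v \<in> cedge n e2"
  shows "v \<in> cov n M \<and> v \<in> cov n ((M - P) \<union> (N \<inter> P))"
proof -
  have "(e1 \<in> M \<and> e2 \<in> N) \<or> (e1 \<in> N \<and> e2 \<in> M)"
    using match_disj[OF M _ _ v] match_disj[OF N _ _ v] e P by blast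
  then show ?thesis unfolding cov_mem using e v by blast
qed

lemma tog_end:
  assumes M: "is_matching n M" and N: "is_matching n N" and P: "P \<subseteq> (M - N) \<union> (N - M)"
    and e: "e \<in> P" and v: "v \<in> cedge n e"
    and oth: "\<And>h. h \<in> M \<union> N \<Longrightarrow> v \<in> cedge n h \<Longrightarrow> h \<noteq> e \<Longrightarrow> h \<in> M \<inter> N"
  shows "(v \<in> cov n ((M - P) \<union> (N \<inter> P)) \<longleftrightarrow> e \<in> N) \<and> (v \<in> cov n M \<longleftrightarrow> e \<in> M)"
proof -
  have eD: "e \<in> (M - N) \<union> (N - M)" using e P by blast
  have 1: "v \<in> cov n ((M - P) \<union> (N \<inter> P)) \<longleftrightarrow> e \<in> N"
  proof
    assume "v \<in> cov n ((M - P) \<union> (N \<inter> P))"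
    then obtain h where h: "h \<in> (M - P) \<union> (N \<inter> P)" "v \<in> cedge n h" unfolding cov_mem by blast
    show "e \<in> N"
    proof (cases "h \<in> N \<inter> P")
      case True
      then have "h \<in> P" by blast
      then have "h \<in> (M - N) \<union> (N - M)" using P by blast
      then have "h = e" using oth[of h] h True by blast
      then show ?thesis using True by blast
    next
      case False
      then have hM: "h \<in> M" "h \<notin> P" using h by auto
      then have "h \<noteq> e" using e by blast
      then have "h \<in> N" using oth[of h] hM h by blast
      show ?thesis
      proof (rule ccontr)
        assume "e \<notin> N" then have "e \<in> M" using eD by blast
        then show False using match_disj[OF M hM(1) _ h(2) v] \<open>h \<noteq> e\<close> by blast
      qed
    qed
  next
    assume "e \<in> N" then show "v \<in> cov n ((M - P) \<union> (N \<inter> P))"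
      unfolding cov_mem using e v by blast
  qed
  have 2: "v \<in> cov n M \<longleftrightarrow> e \<in> M"
  proof
    assume "v \<in> cov n M"
    then obtain h where h: "h \<in> M" "v \<in> cedge n h" unfolding cov_mem by blast
    show "e \<in> M"
    proof (cases "h = e")
      case True then show ?thesis using h by blast
    next
      case False
      then have "h \<in> N" using oth[of h] h by blast
      show ?thesis
      proof (rule ccontr)
        assume "e \<notin> M" then have "e \<in> N" using eD by blast
        then show False using match_disj[OF N \<open>h \<in> N\<close> _ h(2) v] False by blast
      qed
    qed
  next
    assume "e \<in> M" then show "v \<in> cov n M" unfolding cov_mem using v by blast
  qed
  show ?thesis using 1 2 by blast
qed

lemma W_shift: "n \<ge> 1 \<Longrightarrow> t \<ge> 1 \<Longrightarrow> W n (p + t + n - 1) = W n (p + (t - 1))"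
proof -
  assume "n \<ge> 1" "t \<ge> 1"
  then have "p + t + n - 1 = p + (t - 1) + n" by simp
  then show ?thesis unfolding W_def by simp
qed

lemma W_inj:
  assumes "t1 < n" "t2 < n" "W n (p + t1) = W n (p + t2)"
  shows "t1 = t2"
proof (rule ccontr)
  assume ne: "t1 \<noteq> t2"
  have m: "(p + t1) mod n = (p + t2) mod n" using assms(3) unfolding W_def by simp
  show False
  proof (cases "t1 < t2")
    case True
    then have "n dvd (p + t2) - (p + t1)" using m mod_eq_dvd_iff_nat[of "p + t1" "p + t2" n] by simp
    then have "n dvd t2 - t1" by simp
    moreover have "0 < t2 - t1" "t2 - t1 < n" using True assms by auto
    ultimately show False using nat_dvd_not_less by blast
  next
    case False
    then have lt: "t2 < t1" using ne by simp
    then have "n dvd (p + t1) - (p + t2)" using m mod_eq_dvd_iff_nat[of "p + t2" "p + t1" n] by simp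
    then have "n dvd t1 - t2" by simp
    moreover have "0 < t1 - t2" "t1 - t2 < n" using lt assms by auto
    ultimately show False using nat_dvd_not_less by blast
  qed
qed

lemma path_lemma:
  fixes n p L :: nat
  assumes n: "n \<ge> 3" and M: "is_matching n M" and N: "is_matching n N"
    and L: "1 \<le> L" "L < n"
    and inD: "\<And>t. t < L \<Longrightarrow> W n (p + t) \<in> (M - N) \<union> (N - M)"
    and endR: "W n (p + L) \<notin> (M - N) \<union> (N - M)"
    and endL: "W n (p + n - 1) \<notin> (M - N) \<union> (N - M)"
    and P: "P = (\<lambda>t. W n (p + t)) ` {..<L}"
  shows "is_matching n ((M - P) \<union> (N \<inter> P))"
    and "W n p \<noteq> W n (p + L)"
    and "\<And>v. v \<noteq> W n p \<Longrightarrow> v \<noteq> W n (p + L) \<Longrightarrow>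
           (v \<in> cov n ((M - P) \<union> (N \<inter> P)) \<longleftrightarrow> v \<in> cov n M)"
    and "(W n p \<in> cov n ((M - P) \<union> (N \<inter> P)) \<longleftrightarrow> W n p \<in> N) \<and> (W n p \<in> cov n M \<longleftrightarrow> W n p \<in> M)"
    and "(W n (p + L) \<in> cov n ((M - P) \<union> (N \<inter> P)) \<longleftrightarrow> W n (p + (L - 1)) \<in> N)
         \<and> (W n (p + L) \<in> cov n M \<longleftrightarrow> W n (p + (L - 1)) \<in> M)"
proof -
  have n2: "n \<ge> 2" and n1: "n \<ge> 1" using n by auto
  define D where "D = (M - N) \<union> (N - M)"
  have Dsub: "D \<subseteq> {1..n}" using matching_sub[OF M] matching_sub[OF N] unfolding D_def by blast
  have PD: "P \<subseteq> D" using inD unfolding P D_def by blast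
  have adj: "(t' < L \<and> e = W n (p + t')) \<or> (t' \<ge> 1 \<and> e = W n (p + (t' - 1)))"
    if t': "t' \<le> L" and eD: "e \<in> D" and v: "W n (p + t') \<in> cedge n e" for t' e
  proof -
    have e1: "e \<in> {1..n}" using eD Dsub by blast
    have "e = W n (p + t') \<or> e = W n (p + t' + n - 1)"
      using inc_W[OF n2 e1, of "p + t'"] v by simp
    then show ?thesis
    proof
      assume e: "e = W n (p + t')"
      show ?thesis
      proof (cases "t' < L")
        case True then show ?thesis using e by blast
      next
        case False then have "t' = L" using t' by simp
        then show ?thesis using e eD endR unfolding D_def by blast
      qed
    next
      assume e: "e = W n (p + t' + n - 1)"
      show ?thesis
      proof (cases "t' \<ge> 1")
        case True then show ?thesis using e W_shift[OF n1 True, of p] by simp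
      next
        case False then have "t' = 0" by simp
        then show ?thesis using e eD endL unfolding D_def by simp
      qed
    qed
  qed
  have onP: "\<exists>t'\<le>L. v = W n (p + t')" if "v \<in> cedge n (W n (p + t))" "t < L" for v t
  proof -
    have "v = W n (p + t) \<or> v = W n (p + Suc t)" using that(1) cedge_W[OF n2, of "p + t"] by simp
    then show ?thesis
    proof
      assume "v = W n (p + t)" then show ?thesis using that(2) by (intro exI[of _ t]) simp
    next
      assume "v = W n (p + Suc t)" then show ?thesis using that(2) by (intro exI[of _ "Suc t"]) simp
    qed
  qed
  have vin: "W n (p + t) \<in> cedge n (W n (p + t))" for t using cedge_W[OF n2] by simp
  have vin2: "W n (p + Suc t) \<in> cedge n (W n (p + t))" for t using cedge_W[OF n2, of "p + t"] by simp
  show match: "is_matching n ((M - P) \<union> (N \<inter> P))"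
  proof (rule tog_matching[OF M N])
    fix e f assume eD: "e \<in> (M - N) \<union> (N - M)" and f: "f \<in> P" and ne: "cedge n e \<inter> cedge n f \<noteq> {}"
    obtain t where t: "t < L" "f = W n (p + t)" using f unfolding P by blast
    obtain v where v: "v \<in> cedge n e" "v \<in> cedge n f" using ne by blast
    obtain t' where t': "t' \<le> L" "v = W n (p + t')" using onP[of v t] v(2) t by blast
    have "(t' < L \<and> e = W n (p + t')) \<or> (t' \<ge> 1 \<and> e = W n (p + (t' - 1)))"
      using adj[OF t'(1), of e] eD v(1) t'(2) unfolding D_def by blast
    then show "e \<in> P" unfolding P
    proof
      assume "t' < L \<and> e = W n (p + t')" then show "e \<in> (\<lambda>t. W n (p + t)) ` {..<L}" by blast
    next
      assume "1 \<le> t' \<and> e = W n (p + (t' - 1))"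
      moreover have "t' - 1 < L" using t'(1) L by linarith
      ultimately show "e \<in> (\<lambda>t. W n (p + t)) ` {..<L}" by blast
    qed
  qed
  have PD': "P \<subseteq> (M - N) \<union> (N - M)" using PD unfolding D_def .
  show uz: "W n p \<noteq> W n (p + L)"
    using W_inj[of 0 n L p] L by auto
  show "v \<in> cov n ((M - P) \<union> (N \<inter> P)) \<longleftrightarrow> v \<in> cov n M"
    if vu: "v \<noteq> W n p" and vz: "v \<noteq> W n (p + L)" for v
  proof (cases "v \<in> cov n P")
    case False then show ?thesis by (rule tog_out)
  next
    case True
    then obtain f where f: "f \<in> P" "v \<in> cedge n f" unfolding cov_mem by blast
    obtain t where t: "t < L" "f = W n (p + t)" using f unfolding P by blast
    obtain t' where t': "t' \<le> L" "v = W n (p + t')" using onP[of v t] f t by blast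
    have t'0: "t' \<ge> 1"
    proof (rule ccontr)
      assume "\<not> t' \<ge> 1" then have "t' = 0" by simp
      then show False using vu t' by simp
    qed
    have "t' \<noteq> L" using vz t' by auto
    then have t'L: "t' < L" using t'(1) by simp
    have e1: "W n (p + t') \<in> P" unfolding P using t'L by blast
    have e2: "W n (p + (t' - 1)) \<in> P" unfolding P using t'L by auto
    have ne: "W n (p + t') \<noteq> W n (p + (t' - 1))"
    proof
      assume "W n (p + t') = W n (p + (t' - 1))"
      then have "t' = t' - 1" using W_inj[of t' n "t' - 1" p] t'L L by simp
      then show False using t'0 by simp
    qed
    have v1: "v \<in> cedge n (W n (p + t'))" using t' vin by simp
    have v2: "v \<in> cedge n (W n (p + (t' - 1)))" using t' vin2[of "t' - 1"] t'0 by simp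
    show ?thesis using tog_int[OF M N PD' e1 e2 ne v1 v2] by blast
  qed
  show "(W n p \<in> cov n ((M - P) \<union> (N \<inter> P)) \<longleftrightarrow> W n p \<in> N) \<and> (W n p \<in> cov n M \<longleftrightarrow> W n p \<in> M)"
  proof -
    have e: "W n (p + 0) \<in> P" unfolding P using L by (intro image_eqI[of _ _ 0]) auto
    have v: "W n (p + 0) \<in> cedge n (W n (p + 0))" by (rule vin)
    have "(W n (p + 0) \<in> cov n ((M - P) \<union> (N \<inter> P)) \<longleftrightarrow> W n (p + 0) \<in> N) \<and> (W n (p + 0) \<in> cov n M \<longleftrightarrow> W n (p + 0) \<in> M)"
    proof (rule tog_end[OF M N PD' e v])
      fix h assume h: "h \<in> M \<union> N" "W n (p + 0) \<in> cedge n h" "h \<noteq> W n (p + 0)"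
      have "h \<in> {1..n}" using h(1) matching_sub[OF M] matching_sub[OF N] by blast
      then have "h = W n (p + n - 1)" using inc_W[OF n2, of h p] h by simp
      then show "h \<in> M \<inter> N" using endL h(1) by blast
    qed
    then show ?thesis by simp
  qed
  show "(W n (p + L) \<in> cov n ((M - P) \<union> (N \<inter> P)) \<longleftrightarrow> W n (p + (L - 1)) \<in> N)
         \<and> (W n (p + L) \<in> cov n M \<longleftrightarrow> W n (p + (L - 1)) \<in> M)"
  proof (rule tog_end[OF M N PD'])
    show "W n (p + (L - 1)) \<in> P" unfolding P using L by (intro image_eqI[of _ _ "L - 1"]) auto
    show "W n (p + L) \<in> cedge n (W n (p + (L - 1)))" using vin2[of "L - 1"] L by simp
    fix h assume h: "h \<in> M \<union> N" "W n (p + L) \<in> cedge n h" "h \<noteq> W n (p + (L - 1))"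
    have "h \<in> {1..n}" using h(1) matching_sub[OF M] matching_sub[OF N] by blast
    then have "h = W n (p + L) \<or> h = W n (p + L + n - 1)" using inc_W[OF n2, of h "p + L"] h by simp
    moreover have "W n (p + L + n - 1) = W n (p + (L - 1))" using W_shift[OF n1 L(1)] by simp
    ultimately have "h = W n (p + L)" using h(3) by simp
    then show "h \<in> M \<inter> N" using endR h(1) by blast
  qed
qed

lemma arc_exists:
  fixes n a x :: nat and D :: "nat set"
  assumes n: "n \<ge> 3" and aD: "a \<in> D" and Dsub: "D \<subseteq> {1..n}" and x: "x \<in> {1..n}" "x \<notin> D"
  shows "\<exists>p L. 1 \<le> L \<and> L < n \<and> (\<forall>t<L. W n (p + t) \<in> D) \<and> W n (p + L) \<notin> D
     \<and> W n (p + n - 1) \<notin> D \<and> a \<in> (\<lambda>t. W n (p + t)) ` {..<L}"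
proof -
  define x0 where "x0 = x - 1"
  have x0l: "x0 < n" using x unfolding x0_def by auto
  have Wx0: "W n x0 = x" using W_surj[OF x(1)] unfolding x0_def by simp
  have a1: "a \<in> {1..n}" using aD Dsub by blast
  define d where "d = (a - 1 + n - x0) mod n"
  have dl: "d < n" unfolding d_def using n by simp
  have "(x0 + d) mod n = (x0 + (a - 1 + n - x0)) mod n" unfolding d_def by (simp add: mod_add_right_eq)
  also have "x0 + (a - 1 + n - x0) = (a - 1) + n" using x0l by simp
  also have "((a - 1) + n) mod n = (a - 1) mod n" by (rule mod_add_self2)
  also have "(a - 1) mod n = a - 1" using a1 by (intro mod_less) auto
  finally have Wd: "W n (x0 + d) = a" unfolding W_def using a1 by simp
  define S where "S = {s. s \<le> d \<and> W n (x0 + s) \<notin> D}"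
  have finS: "finite S" unfolding S_def by simp
  have S0: "0 \<in> S" unfolding S_def using Wx0 x(2) by simp
  define s0 where "s0 = Max S"
  have s0S: "s0 \<in> S" unfolding s0_def using finS S0 Max_in by blast
  have s0d: "s0 < d"
  proof -
    have "s0 \<le> d" "W n (x0 + s0) \<notin> D" using s0S unfolding S_def by auto
    moreover have "s0 \<noteq> d" using calculation(2) Wd aD by auto
    ultimately show ?thesis by simp
  qed
  have aboveD: "W n (x0 + s) \<in> D" if "s0 < s" "s \<le> d" for s
  proof (rule ccontr)
    assume "W n (x0 + s) \<notin> D"
    then have "s \<in> S" unfolding S_def using that by simp
    then have "s \<le> s0" unfolding s0_def using finS by simp
    then show False using that by simp
  qed
  define p where "p = x0 + s0 + 1"
  have endL: "W n (p + n - 1) \<notin> D"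
  proof -
    have "p + n - 1 = (x0 + s0) + n" unfolding p_def by simp
    then have "W n (p + n - 1) = W n (x0 + s0)" unfolding W_def by simp
    then show ?thesis using s0S unfolding S_def by simp
  qed
  define L where "L = (LEAST l. W n (p + l) \<notin> D)"
  have ex: "W n (p + (n - 1)) \<notin> D" using endL n by simp
  have LR: "W n (p + L) \<notin> D" unfolding L_def using ex by (rule LeastI)
  have Lle: "L \<le> n - 1" unfolding L_def using ex by (rule Least_le)
  have inD: "W n (p + t) \<in> D" if "t < L" for t
    using not_less_Least[of t "\<lambda>l. W n (p + l) \<notin> D"] that unfolding L_def by blast
  define ta where "ta = d - s0 - 1"
  have pta: "p + ta = x0 + d" unfolding p_def ta_def using s0d by simp
  have taL: "ta < L"
  proof (rule ccontr)
    assume "\<not> ta < L"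
    then have "L \<le> ta" by simp
    then have "W n (x0 + (s0 + 1 + L)) \<in> D" using aboveD[of "s0 + 1 + L"] s0d unfolding ta_def by simp
    then show False using LR unfolding p_def by (simp add: add.assoc)
  qed
  have "a \<in> (\<lambda>t. W n (p + t)) ` {..<L}"
    using taL Wd pta by (intro image_eqI[of _ _ ta]) auto
  moreover have "1 \<le> L" using taL by simp
  moreover have "L < n" using Lle n by simp
  ultimately show ?thesis using inD LR endL by blast
qed

lemma lexless_iff: "lexless xs ys \<longleftrightarrow> xs < ys"
  unfolding lexless_def list_less_def ..

lemma lex_min_diff:
  fixes S T :: "nat set"
  assumes "finite S" "finite T" "card S = card T" "S \<noteq> T" "Min ((S - T) \<union> (T - S)) \<in> S"
  shows "sorted_list_of_set S < sorted_list_of_set T"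
  using assms
proof (induction "card S" arbitrary: S T)
  case 0
  then show ?case by simp
next
  case (Suc k)
  have Sne: "S \<noteq> {}" and Tne: "T \<noteq> {}" using Suc.hyps(2) Suc.prems(3) by auto
  define mS where "mS = Min S"
  define mT where "mT = Min T"
  have sS: "sorted_list_of_set S = mS # sorted_list_of_set (S - {mS})"
    unfolding mS_def using Suc.prems(1) Sne by (rule sorted_list_of_set_nonempty)
  have sT: "sorted_list_of_set T = mT # sorted_list_of_set (T - {mT})"
    unfolding mT_def using Suc.prems(2) Tne by (rule sorted_list_of_set_nonempty)
  have mSS: "mS \<in> S" unfolding mS_def using Suc.prems(1) Sne by simp
  have mTT: "mT \<in> T" unfolding mT_def using Suc.prems(2) Tne by simp
  define Dd where "Dd = (S - T) \<union> (T - S)"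
  have finD: "finite Dd" unfolding Dd_def using Suc.prems(1,2) by simp
  have Dne: "Dd \<noteq> {}" unfolding Dd_def using Suc.prems(4) by blast
  have dS: "Min Dd \<in> S" using Suc.prems(5) unfolding Dd_def .
  have dD: "Min Dd \<in> Dd" using finD Dne by simp
  show ?case
  proof (cases "mS = mT")
    case True
    have c1: "k = card (S - {mS})" using Suc.hyps(2) mSS Suc.prems(1) by simp
    have c2: "card (S - {mS}) = card (T - {mS})"
      using Suc.prems(1,2,3) mSS mTT True by simp
    have ne: "S - {mS} \<noteq> T - {mS}"
    proof
      assume "S - {mS} = T - {mS}"
      then have "S = T" using mSS mTT True by blast
      then show False using Suc.prems(4) by simp
    qed
    have eqD: "((S - {mS}) - (T - {mS})) \<union> ((T - {mS}) - (S - {mS})) = Dd"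
      unfolding Dd_def using mSS mTT True by blast
    have "Min (((S - {mS}) - (T - {mS})) \<union> ((T - {mS}) - (S - {mS}))) \<in> S - {mS}"
      using eqD dS dD unfolding Dd_def by auto
    then have "sorted_list_of_set (S - {mS}) < sorted_list_of_set (T - {mS})"
      using Suc.hyps(1)[OF c1 _ _ c2 ne] Suc.prems(1,2) by simp
    then show ?thesis using sS sT True by simp
  next
    case False
    have "mS < mT"
    proof (rule ccontr)
      assume "\<not> mS < mT"
      then have lt: "mT < mS" using False by simp
      have "mT \<notin> S"
      proof
        assume "mT \<in> S" then have "mS \<le> mT" unfolding mS_def using Suc.prems(1) by simp
        then show False using lt by simp
      qed
      then have "mT \<in> Dd" unfolding Dd_def using mTT by blast
      then have "Min Dd \<le> mT" using finD by simp
      moreover have "mS \<le> Min Dd" unfolding mS_def using Suc.prems(1) dS by simp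
      ultimately show False using lt by simp
    qed
    then show ?thesis using sS sT by simp
  qed
qed

lemma matchings_sub: "matchings n k \<subseteq> Pow {1..n}"
  unfolding matchings_def is_matching_def by blast

lemma gkey_prop:
  assumes M0: "M0 \<in> matchings n k" "mprod n M0 = m"
  shows "\<exists>Mm. Mm \<in> matchings n k \<and> mprod n Mm = m \<and> gkey n k m = sorted_list_of_set Mm"
    and "\<And>M. M \<in> matchings n k \<Longrightarrow> mprod n M = m \<Longrightarrow> gkey n k m \<le> sorted_list_of_set M"
proof -
  define SS where "SS = {sorted_list_of_set M | M. M \<in> matchings n k \<and> mprod n M = m}"
  have "SS \<subseteq> sorted_list_of_set ` Pow {1..n}" unfolding SS_def using matchings_sub by blast
  moreover have "finite (sorted_list_of_set ` Pow {1..n})" by simp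
  ultimately have fin: "finite SS" by (rule finite_subset)
  have ne: "SS \<noteq> {}" unfolding SS_def using M0 by blast
  define L0 where "L0 = Min SS"
  have L0S: "L0 \<in> SS" unfolding L0_def using fin ne by simp
  have L0le: "L0 \<le> L" if "L \<in> SS" for L unfolding L0_def using fin that by simp
  have g: "gkey n k m = L0"
    unfolding gkey_def SS_def[symmetric]
  proof (rule the_equality)
    show "L0 \<in> SS \<and> (\<forall>L'\<in>SS. L' \<noteq> L0 \<longrightarrow> lexless L0 L')"
      using L0S L0le unfolding lexless_iff by (auto simp: order_le_less)
  next
    fix L assume L: "L \<in> SS \<and> (\<forall>L'\<in>SS. L' \<noteq> L \<longrightarrow> lexless L L')"
    show "L = L0"
    proof (rule ccontr)
      assume "L \<noteq> L0"
      then have "L < L0" using L L0S unfolding lexless_iff by auto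
      moreover have "L0 \<le> L" using L L0le by blast
      ultimately show False by simp
    qed
  qed
  show "\<exists>Mm. Mm \<in> matchings n k \<and> mprod n Mm = m \<and> gkey n k m = sorted_list_of_set Mm"
    using L0S g unfolding SS_def by blast
  show "gkey n k m \<le> sorted_list_of_set M" if "M \<in> matchings n k" "mprod n M = m" for M
    using L0le[of "sorted_list_of_set M"] that g unfolding SS_def by blast
qed

lemma mprod_monoms: "M \<in> matchings n k \<Longrightarrow> mprod n M \<in> monoms n"
  unfolding mprod_cov monoms_def matchings_def
  using finite_cov[OF matching_sub] cov_sub[OF matching_sub] by simp

lemma size_mprod: "n \<ge> 2 \<Longrightarrow> M \<in> matchings n k \<Longrightarrow> size (mprod n M) = 2 * k"
  unfolding mprod_cov matchings_def using card_cov by simp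

lemma mingens_sqpow:
  assumes n: "n \<ge> 2"
  shows "mingens (sqpow n k) = mprod n ` matchings n k"
proof
  show "mingens (sqpow n k) \<subseteq> mprod n ` matchings n k"
  proof
    fix u assume u: "u \<in> mingens (sqpow n k)"
    then have "u \<in> sqpow n k" unfolding mingens_def by blast
    then obtain g where g: "g \<in> mprod n ` matchings n k" "g \<subseteq># u"
      unfolding sqpow_def mideal_def by blast
    have "g \<in> sqpow n k" unfolding sqpow_def mideal_def using g(1) mprod_monoms by blast
    then have "g = u" using u g(2) unfolding mingens_def by blast
    then show "u \<in> mprod n ` matchings n k" using g(1) by simp
  qed
next
  show "mprod n ` matchings n k \<subseteq> mingens (sqpow n k)"
  proof
    fix u assume "u \<in> mprod n ` matchings n k"
    then obtain M where M: "M \<in> matchings n k" "u = mprod n M" by blast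
    have uS: "u \<in> sqpow n k" unfolding sqpow_def mideal_def using M mprod_monoms by blast
    have "v = u" if v: "v \<in> sqpow n k" "v \<subseteq># u" for v
    proof -
      obtain M2 where M2: "M2 \<in> matchings n k" "mprod n M2 \<subseteq># v"
        using v(1) unfolding sqpow_def mideal_def by blast
      have sub: "mprod n M2 \<subseteq># u" using M2(2) v(2) by (rule subset_mset.trans)
      have "size (mprod n M2) = size u" using size_mprod[OF n M2(1)] size_mprod[OF n M(1)] M(2) by simp
      then have "mprod n M2 = u" using sub mset_subset_size subset_mset.le_less by fastforce
      then show ?thesis using M2(2) v(2) by simp
    qed
    then show "u \<in> mingens (sqpow n k)" unfolding mingens_def using uS by blast
  qed
qed

lemma colon_single:
  assumes y: "y \<in> monoms n"
  shows "mcolon n (mideal n {x}) y = mideal n {x - y}"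
  unfolding mcolon_def mideal_def using y by (auto simp: monoms_def subset_eq_diff_conv)

lemma disj1_lemma:
  assumes Q: "Q \<in> matchings n q" and sub: "cov n Q \<subseteq> A \<union> B"
    and mi: "mi = mset_set A" and mj: "mj = mset_set B" and finA: "finite A" and finB: "finite B"
  shows "mcolon n (mideal n {mj}) mi \<subseteq> mcolon n (sqpow n q) mi"
proof
  fix g assume "g \<in> mcolon n (mideal n {mj}) mi"
  then have g: "g \<in> monoms n" "g + mi \<in> monoms n" "mj \<subseteq># g + mi"
    unfolding mcolon_def mideal_def by auto
  have finQ: "finite (cov n Q)" using Q unfolding matchings_def
    using finite_cov[OF matching_sub] by blast
  have "mprod n Q \<subseteq># g + mi"
    unfolding subseteq_mset_def mprod_cov
  proof
    fix v
    show "count (mset_set (cov n Q)) v \<le> count (g + mi) v"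
    proof (cases "v \<in> cov n Q")
      case False then show ?thesis by simp
    next
      case True
      then have "v \<in> A \<or> v \<in> B" using sub by blast
      then have "1 \<le> count (g + mi) v"
      proof
        assume "v \<in> A" then show ?thesis using mi finA by simp
      next
        assume "v \<in> B" then have "count mj v = 1" using mj finB by simp
        moreover have "count mj v \<le> count (g + mi) v" using g(3) unfolding subseteq_mset_def by blast
        ultimately show ?thesis by simp
      qed
      then show ?thesis using True finQ by simp
    qed
  qed
  then have "g + mi \<in> sqpow n q" unfolding sqpow_def mideal_def using g(2) Q by blast
  then show "g \<in> mcolon n (sqpow n q) mi" unfolding mcolon_def using g(1) by blast
qed

lemma disj2_lemma:
  assumes mi: "mi = mset_set A" and mj: "mj = mset_set B" and mr: "mr = mset_set X"
    and fin: "finite A" "finite B" "finite X"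
    and XA: "X - A = {w}" and wB: "w \<in> B" and Xs: "X \<subseteq> {1..n}" and As: "A \<subseteq> {1..n}"
  shows "(\<exists>k\<in>{1..n}. mcolon n (mideal n {mr}) mi = mideal n {{#k#}})
     \<and> mcolon n (mideal n {mj}) mi \<subseteq> mcolon n (mideal n {mr}) mi"
proof -
  have mim: "mi \<in> monoms n" unfolding mi monoms_def using fin As by simp
  have w: "w \<in> {1..n}" using XA Xs by blast
  have d: "mr - mi = {#w#}"
  proof (rule multiset_eqI)
    fix v
    show "count (mr - mi) v = count {#w#} v"
      unfolding mr mi using fin XA by (cases "v = w") (auto simp: count_mset_set')
  qed
  have c1: "mcolon n (mideal n {mr}) mi = mideal n {{#w#}}" using colon_single[OF mim] d by simp
  have wd: "w \<in># mj - mi"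
  proof -
    have "count (mj - mi) w = 1" unfolding mj mi using fin wB XA by (auto simp: count_mset_set')
    then show ?thesis by (simp add: count_greater_zero_iff[symmetric])
  qed
  have c2: "mideal n {mj - mi} \<subseteq> mideal n {{#w#}}"
    unfolding mideal_def using wd mset_subset_eqD by fastforce
  show ?thesis using c1 c2 colon_single[OF mim, of mj] w by auto
qed

theorem lemma3p4:
  fixes n q :: nat and ms :: "nat multiset list"
  assumes "n \<ge> 3" and "q \<ge> 2" and "q - 1 \<le> n div 2"
    and "set ms = mingens (sqpow n (q - 1))"
    and "distinct ms"
    and "sorted_wrt (\<lambda>a b. lexless (gkey n (q - 1) a) (gkey n (q - 1) b)) ms"
  shows "\<forall>i < length ms. \<forall>j < i.
     mcolon n (mideal n {ms ! j}) (ms ! i) \<subseteq> mcolon n (sqpow n q) (ms ! i)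
     \<or> (\<exists>r < i. (\<exists>k\<in>{1..n}. mcolon n (mideal n {ms ! r}) (ms ! i) = mideal n {{#k#}})
               \<and> mcolon n (mideal n {ms ! j}) (ms ! i) \<subseteq> mcolon n (mideal n {ms ! r}) (ms ! i))"
proof (intro allI impI)
  fix i j assume i: "i < length ms" and j: "j < i"
  let ?G = "mcolon n (mideal n {ms ! j}) (ms ! i) \<subseteq> mcolon n (sqpow n q) (ms ! i)
     \<or> (\<exists>r < i. (\<exists>k\<in>{1..n}. mcolon n (mideal n {ms ! r}) (ms ! i) = mideal n {{#k#}})
               \<and> mcolon n (mideal n {ms ! j}) (ms ! i) \<subseteq> mcolon n (mideal n {ms ! r}) (ms ! i))"
  have n3: "n \<ge> 3" using assms(1) .
  have n2: "n \<ge> 2" and n1: "n \<ge> 1" using n3 by auto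
  define k where "k = q - 1"
  have qk: "q = Suc k" unfolding k_def using assms(2) by simp
  have setms: "set ms = mprod n ` matchings n k" using assms(4) mingens_sqpow[OF n2] unfolding k_def by simp
  have sw: "sorted_wrt (\<lambda>a b. gkey n k a < gkey n k b) ms"
    using assms(6) unfolding k_def lexless_iff .
  have jl: "j < length ms" using i j by simp
  define mi where "mi = ms ! i"
  define mj where "mj = ms ! j"
  have mi_in: "mi \<in> mprod n ` matchings n k" unfolding mi_def using i setms nth_mem by blast
  have mj_in: "mj \<in> mprod n ` matchings n k" unfolding mj_def using jl setms nth_mem by blast
  obtain Mi where Mi: "Mi \<in> matchings n k" "mprod n Mi = mi" "gkey n k mi = sorted_list_of_set Mi"
    using gkey_prop(1) mi_in by blast
  obtain Mj where Mj: "Mj \<in> matchings n k" "mprod n Mj = mj" "gkey n k mj = sorted_list_of_set Mj"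
    using gkey_prop(1) mj_in by blast
  have lt: "sorted_list_of_set Mj < sorted_list_of_set Mi"
    using sorted_wrt_nth_less[OF sw j i] Mi(3) Mj(3) unfolding mi_def mj_def by simp
  have mne: "mi \<noteq> mj" unfolding mi_def mj_def using assms(5) i jl j nth_eq_iff_index_eq by fastforce
  have Mne: "Mi \<noteq> Mj" using mne Mi(2) Mj(2) by blast
  have MiM: "is_matching n Mi" "card Mi = k" using Mi(1) unfolding matchings_def by auto
  have MjM: "is_matching n Mj" "card Mj = k" using Mj(1) unfolding matchings_def by auto
  have Mis: "Mi \<subseteq> {1..n}" and Mjs: "Mj \<subseteq> {1..n}" using matching_sub MiM MjM by auto
  have finMi: "finite Mi" and finMj: "finite Mj"
    using Mis Mjs finite_subset[OF _ finite_atLeastAtMost] by blast+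
  define A where "A = cov n Mi"
  define B where "B = cov n Mj"
  have finA: "finite A" and finB: "finite B" unfolding A_def B_def using finite_cov Mis Mjs by auto
  have As: "A \<subseteq> {1..n}" and Bs: "B \<subseteq> {1..n}" unfolding A_def B_def using cov_sub Mis Mjs by auto
  have cardA: "card A = 2 * k" unfolding A_def using card_cov[OF MiM(1) n2] MiM(2) by simp
  have cardB: "card B = 2 * k" unfolding B_def using card_cov[OF MjM(1) n2] MjM(2) by simp
  have miA: "mi = mset_set A" unfolding A_def using Mi(2) mprod_cov by metis
  have mjB: "mj = mset_set B" unfolding B_def using Mj(2) mprod_cov by metis
  define D where "D = (Mi - Mj) \<union> (Mj - Mi)"
  have Dsub: "D \<subseteq> {1..n}" unfolding D_def using Mis Mjs by blast
  have finD: "finite D" unfolding D_def using finMi finMj by simp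
  have Dne: "D \<noteq> {}" unfolding D_def using Mne by blast
  define a where "a = Min D"
  have aD: "a \<in> D" unfolding a_def using finD Dne by simp
  have aMj: "a \<in> Mj"
  proof (rule ccontr)
    assume "a \<notin> Mj"
    then have "a \<in> Mi" using aD unfolding D_def by blast
    then have "sorted_list_of_set Mi < sorted_list_of_set Mj"
      using lex_min_diff[OF finMi finMj] MiM(2) MjM(2) Mne unfolding a_def D_def by simp
    then show False using lt by simp
  qed
  have aMi: "a \<notin> Mi" using aD aMj unfolding D_def by blast
  have exx: "\<exists>x\<in>{1..n}. x \<notin> D"
  proof (rule ccontr)
    assume "\<not> (\<exists>x\<in>{1..n}. x \<notin> D)"
    then have allD: "\<And>x. x \<in> {1..n} \<Longrightarrow> x \<in> D" by blast
    have "v \<in> A \<and> v \<in> B" if v: "v \<in> {1..n}" for v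
    proof -
      define y where "y = v - 1"
      have vy: "v = W n y" unfolding y_def using W_surj[OF v] .
      have e1: "W n y \<in> D" using allD W_range[OF n1] by blast
      have e2: "W n (y + n - 1) \<in> D" using allD W_range[OF n1] by blast
      have ne: "W n y \<noteq> W n (y + n - 1)" using W_ne_pred[OF n2] .
      have v1: "v \<in> cedge n (W n y)" using vy inc_W[OF n2 W_range[OF n1]] by blast
      have v2: "v \<in> cedge n (W n (y + n - 1))" using vy inc_W[OF n2 W_range[OF n1]] by blast
      have "v \<in> cov n Mi" using tog_int[OF MiM(1) MjM(1) _ e1 e2 ne v1 v2] unfolding D_def by blast
      moreover have "v \<in> cov n Mj"
        using tog_int[OF MjM(1) MiM(1) _ e1 e2 ne v1 v2] unfolding D_def by blast
      ultimately show ?thesis unfolding A_def B_def by blast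
    qed
    then have "A = B" using As Bs by blast
    then show False using mne miA mjB by simp
  qed
  then obtain x where x: "x \<in> {1..n}" "x \<notin> D" by blast
  obtain p L where pL: "1 \<le> L" "L < n" "\<forall>t<L. W n (p + t) \<in> D" "W n (p + L) \<notin> D"
     "W n (p + n - 1) \<notin> D" "a \<in> (\<lambda>t. W n (p + t)) ` {..<L}"
    using arc_exists[OF n3 aD Dsub x] by blast
  define P where "P = (\<lambda>t. W n (p + t)) ` {..<L}"
  have D': "(Mj - Mi) \<union> (Mi - Mj) = D" unfolding D_def by blast
  note PL1 = path_lemma[OF n3 MiM(1) MjM(1) pL(1,2) _ _ _ P_def]
  note PL2 = path_lemma[OF n3 MjM(1) MiM(1) pL(1,2) _ _ _ P_def]
  have inD1: "\<And>t. t < L \<Longrightarrow> W n (p + t) \<in> (Mi - Mj) \<union> (Mj - Mi)" using pL(3) unfolding D_def by blast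
  have inD2: "\<And>t. t < L \<Longrightarrow> W n (p + t) \<in> (Mj - Mi) \<union> (Mi - Mj)" using pL(3) unfolding D_def by blast
  have eR1: "W n (p + L) \<notin> (Mi - Mj) \<union> (Mj - Mi)" using pL(4) unfolding D_def .
  have eR2: "W n (p + L) \<notin> (Mj - Mi) \<union> (Mi - Mj)" using pL(4) D' by simp
  have eL1: "W n (p + n - 1) \<notin> (Mi - Mj) \<union> (Mj - Mi)" using pL(5) unfolding D_def .
  have eL2: "W n (p + n - 1) \<notin> (Mj - Mi) \<union> (Mi - Mj)" using pL(5) D' by simp
  define M' where "M' = (Mi - P) \<union> (Mj \<inter> P)"
  define N' where "N' = (Mj - P) \<union> (Mi \<inter> P)"
  define u where "u = W n p"
  define z where "z = W n (p + L)"
  define eu where "eu = W n p"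
  define ez where "ez = W n (p + (L - 1))"
  have M'm: "is_matching n M'" unfolding M'_def using PL1(1)[OF inD1 eR1 eL1] .
  have N'm: "is_matching n N'" unfolding N'_def using PL2(1)[OF inD2 eR2 eL2] .
  have uz: "u \<noteq> z" unfolding u_def z_def using PL1(2)[OF inD1 eR1 eL1] .
  have X_oth: "v \<in> cov n M' \<longleftrightarrow> v \<in> A" if "v \<noteq> u" "v \<noteq> z" for v
    unfolding M'_def A_def using PL1(3)[OF inD1 eR1 eL1] that unfolding u_def z_def by blast
  have Y_oth: "v \<in> cov n N' \<longleftrightarrow> v \<in> B" if "v \<noteq> u" "v \<noteq> z" for v
    unfolding N'_def B_def using PL2(3)[OF inD2 eR2 eL2] that unfolding u_def z_def by blast
  have X_u: "(u \<in> cov n M' \<longleftrightarrow> eu \<in> Mj) \<and> (u \<in> A \<longleftrightarrow> eu \<in> Mi)"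
    unfolding M'_def A_def u_def eu_def using PL1(4)[OF inD1 eR1 eL1] .
  have Y_u: "(u \<in> cov n N' \<longleftrightarrow> eu \<in> Mi) \<and> (u \<in> B \<longleftrightarrow> eu \<in> Mj)"
    unfolding N'_def B_def u_def eu_def using PL2(4)[OF inD2 eR2 eL2] .
  have X_z: "(z \<in> cov n M' \<longleftrightarrow> ez \<in> Mj) \<and> (z \<in> A \<longleftrightarrow> ez \<in> Mi)"
    unfolding M'_def A_def z_def ez_def using PL1(5)[OF inD1 eR1 eL1] .
  have Y_z: "(z \<in> cov n N' \<longleftrightarrow> ez \<in> Mi) \<and> (z \<in> B \<longleftrightarrow> ez \<in> Mj)"
    unfolding N'_def B_def z_def ez_def using PL2(5)[OF inD2 eR2 eL2] .
  have euD: "eu \<in> D" unfolding eu_def using pL(3)[rule_format, of 0] pL(1) by simp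
  have ezD: "ez \<in> D" unfolding ez_def using pL(3)[rule_format, of "L - 1"] pL(1) by simp
  have M's: "M' \<subseteq> Mi \<union> Mj" and N's: "N' \<subseteq> Mi \<union> Mj" unfolding M'_def N'_def by auto
  have covU: "cov n Q \<subseteq> A \<union> B" if "Q \<subseteq> Mi \<union> Mj" for Q
    unfolding A_def B_def cov_def using that by blast
  have M'sub: "M' \<subseteq> {1..n}" "N' \<subseteq> {1..n}" using M's N's Mis Mjs by auto
  have finX: "finite (cov n M')" "finite (cov n N')" using finite_cov M'sub by auto
  have PD: "P \<subseteq> D" unfolding P_def using pL(3) by blast
  have finP: "finite P" unfolding P_def by simp
  have aP: "a \<in> P" unfolding P_def using pL(6) .
  have MinP: "Min P = a"
  proof (rule antisym)
    show "Min P \<le> a" using finP aP by simp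
    have "Min P \<in> D" using PD finP aP Min_in by blast
    then show "a \<le> Min P" unfolding a_def using finD by simp
  qed
  have DISJ1: ?G if Q: "Q \<in> matchings n q" "cov n Q \<subseteq> A \<union> B" for Q
    using disj1_lemma[OF Q miA mjB finA finB] unfolding mi_def mj_def by blast
  have DISJ2: ?G if M2: "M2 \<in> matchings n k" "sorted_list_of_set M2 < sorted_list_of_set Mi"
      and w: "cov n M2 - A = {w}" "w \<in> B" for M2 w
  proof -
    define mr where "mr = mprod n M2"
    have "mr \<in> set ms" unfolding mr_def setms using M2(1) by blast
    then obtain r where r: "r < length ms" "ms ! r = mr" by (auto simp: in_set_conv_nth)
    have "gkey n k mr \<le> sorted_list_of_set M2" using gkey_prop(2)[OF M2(1) refl, of M2] M2(1) unfolding mr_def by blast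
    then have glt: "gkey n k mr < gkey n k mi" using M2(2) Mi(3) by simp
    have ri: "r < i"
    proof (rule ccontr)
      assume "\<not> r < i"
      then consider "r = i" | "i < r" by linarith
      then show False
      proof cases
        case 1 then show False using glt r(2) unfolding mi_def by simp
      next
        case 2 then have "gkey n k mi < gkey n k mr" using sorted_wrt_nth_less[OF sw 2 r(1)] r(2) unfolding mi_def by simp
        then show False using glt by simp
      qed
    qed
    have M2m: "is_matching n M2" using M2(1) unfolding matchings_def by blast
    have X2s: "cov n M2 \<subseteq> {1..n}" using cov_sub[OF matching_sub[OF M2m]] .
    have finX2: "finite (cov n M2)" using finite_cov[OF matching_sub[OF M2m]] .
    have "(\<exists>k\<in>{1..n}. mcolon n (mideal n {mr}) mi = mideal n {{#k#}})
     \<and> mcolon n (mideal n {mj}) mi \<subseteq> mcolon n (mideal n {mr}) mi"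
      by (rule disj2_lemma[OF miA mjB _ finA finB finX2 w X2s As]) (simp add: mr_def mprod_cov)
    then show ?thesis using ri r(2) unfolding mi_def mj_def by blast
  qed
  have lexM': "sorted_list_of_set M' < sorted_list_of_set Mi" if cM': "card M' = k"
  proof -
    have finM': "finite M'" using M'sub finite_subset[OF _ finite_atLeastAtMost] by blast
    have aM': "a \<in> M'" unfolding M'_def using aMj aP by blast
    have symd: "(M' - Mi) \<union> (Mi - M') = P" unfolding M'_def using PD unfolding D_def by blast
    show ?thesis
      using lex_min_diff[OF finM' finMi] cM' MiM(2) aM' aMi MinP symd by auto
  qed
  consider "eu \<in> Mj" "ez \<in> Mj" | "eu \<in> Mi" "ez \<in> Mi" | "eu \<in> Mj" "ez \<in> Mi" | "eu \<in> Mi" "ez \<in> Mj"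
    using euD ezD unfolding D_def by blast
  then show "mcolon n (mideal n {ms ! j}) (ms ! i) \<subseteq> mcolon n (sqpow n q) (ms ! i)
     \<or> (\<exists>r < i. (\<exists>k\<in>{1..n}. mcolon n (mideal n {ms ! r}) (ms ! i) = mideal n {{#k#}})
               \<and> mcolon n (mideal n {ms ! j}) (ms ! i) \<subseteq> mcolon n (mideal n {ms ! r}) (ms ! i))"
  proof cases
    case 1
    have eum: "eu \<notin> Mi" "ez \<notin> Mi" using 1 euD ezD unfolding D_def by auto
    have X: "cov n M' = insert u (insert z A)"
    proof (rule set_eqI)
      fix v show "v \<in> cov n M' \<longleftrightarrow> v \<in> insert u (insert z A)"
        using X_oth[of v] X_u X_z 1 eum uz by (cases "v = u"; cases "v = z") auto
    qed
    have "u \<notin> A" "z \<notin> A" using X_u X_z eum by auto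
    then have "card (cov n M') = 2 * k + 2" using X uz finA cardA by simp
    then have "card M' = q" using card_cov[OF M'm n2] qk by simp
    then have "M' \<in> matchings n q" unfolding matchings_def using M'm by blast
    then show ?thesis using DISJ1[OF _ covU[OF M's]] by blast
  next
    case 2
    have eum: "eu \<notin> Mj" "ez \<notin> Mj" using 2 euD ezD unfolding D_def by auto
    have Y: "cov n N' = insert u (insert z B)"
    proof (rule set_eqI)
      fix v show "v \<in> cov n N' \<longleftrightarrow> v \<in> insert u (insert z B)"
        using Y_oth[of v] Y_u Y_z 2 eum uz by (cases "v = u"; cases "v = z") auto
    qed
    have "u \<notin> B" "z \<notin> B" using Y_u Y_z eum by auto
    then have "card (cov n N') = 2 * k + 2" using Y uz finB cardB by simp
    then have "card N' = q" using card_cov[OF N'm n2] qk by simp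
    then have "N' \<in> matchings n q" unfolding matchings_def using N'm by blast
    then show ?thesis using DISJ1[OF _ covU[OF N's]] by blast
  next
    case 3
    have eum: "eu \<notin> Mi" "ez \<notin> Mj" using 3 euD ezD unfolding D_def by auto
    have X: "cov n M' = insert u (A - {z})"
    proof (rule set_eqI)
      fix v show "v \<in> cov n M' \<longleftrightarrow> v \<in> insert u (A - {z})"
        using X_oth[of v] X_u X_z 3 eum uz by (cases "v = u"; cases "v = z") auto
    qed
    have uA: "u \<notin> A" and zA: "z \<in> A" using X_u X_z eum 3 by auto
    have "card A > 0" using finA zA uA card_gt_0_iff by blast
    then have "card (cov n M') = 2 * k" using X uA zA finA cardA by (simp add: card_Diff_singleton)
    then have cM': "card M' = k" using card_cov[OF M'm n2] by simp
    then have "M' \<in> matchings n k" unfolding matchings_def using M'm by blast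
    moreover have "cov n M' - A = {u}" using X uA by blast
    moreover have "u \<in> B" using Y_u 3 by blast
    ultimately show ?thesis using DISJ2 lexM'[OF cM'] by blast
  next
    case 4
    have ezm: "ez \<notin> Mi" "eu \<notin> Mj" using 4 ezD euD unfolding D_def by auto
    have X: "cov n M' = insert z (A - {u})"
    proof (rule set_eqI)
      fix v show "v \<in> cov n M' \<longleftrightarrow> v \<in> insert z (A - {u})"
        using X_oth[of v] X_u X_z 4 ezm uz by (cases "v = u"; cases "v = z") auto
    qed
    have zA: "z \<notin> A" and uA: "u \<in> A" using X_u X_z ezm 4 by auto
    have "card A > 0" using finA zA uA card_gt_0_iff by blast
    then have "card (cov n M') = 2 * k" using X uA zA finA cardA by (simp add: card_Diff_singleton)
    then have cM': "card M' = k" using card_cov[OF M'm n2] by simp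
    then have "M' \<in> matchings n k" unfolding matchings_def using M'm by blast
    moreover have "cov n M' - A = {z}" using X zA by blast
    moreover have "z \<in> B" using Y_z 4 by blast
    ultimately show ?thesis using DISJ2 lexM'[OF cM'] by blast
  qed
qed

end
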